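(* Let $\beta_1,\beta_2$ be complex numbers with $\mathrm{Re}(\beta_j)\ge\gamma\ge1$ for $j=1,2$. Let $\psi_j(z)=1/(z+\beta_j)$ for $\mathrm{Re}(z)\ge0$ and $\theta=\psi_1\circ\psi_2$. Then for all $z,w\in\mathbb C$ with $\mathrm{Re}(z)\ge0$ and $\mathrm{Re}(w)\ge0$, $$|\theta(z)-\theta(w)|\le(\gamma^2+1)^{-2}|z-w|.$$ *)

theory Defs
  imports "HOL-Analysis.Analysis"
begin

end

theory Submission
  imports Defs
begin

lemma key:
  fixes p q :: complex and \<gamma> :: real
  assumes g: "\<gamma> \<ge> 1" and p: "Re p \<ge> \<gamma>" and q: "Re q \<ge> \<gamma>"
  shows "cmod (1 + p * q) \<ge> \<gamma>\<^sup>2 + 1"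
proof -
  define a where "a = Re p" define b where "b = Im p"
  define c where "c = Re q" define d where "d = Im q"
  have ga: "\<gamma> \<le> a" "\<gamma> \<le> c" using p q a_def c_def by auto
  have ac: "a * c \<ge> \<gamma> * \<gamma>" using g ga by (intro mult_mono) auto
  have acs: "(a*c)*(a*c) \<ge> (\<gamma>*\<gamma>)*(\<gamma>*\<gamma>)" using mult_mono[OF ac ac] g ga by (simp add: mult_nonneg_nonneg)
  have a2: "a*a \<ge> 1" using g ga mult_mono[of 1 a 1 a] by simp
  have c2: "c*c \<ge> 1" using g ga mult_mono[of 1 c 1 c] by simp
  have d1: "(a*a)*(d*d) \<ge> d*d" using a2 mult_right_mono[of 1 "a*a" "d*d"] by simp
  have b1: "(b*b)*(c*c) \<ge> b*b" using c2 mult_left_mono[of 1 "c*c" "b*b"] by simp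
  have bd: "(b-d)*(b-d) \<ge> 0" "(b*d)*(b*d) \<ge> 0" by simp_all
  have e: "(cmod (1 + p*q))^2 = (1 + (a*c - b*d))*(1 + (a*c - b*d)) + (a*d + b*c)*(a*d + b*c)"
    unfolding cmod_power2 by (simp add: a_def b_def c_def d_def power2_eq_square)
  have "(\<gamma>\<^sup>2 + 1)^2 \<le> (cmod (1 + p*q))^2"
  proof -
    have "(\<gamma>*\<gamma> + 1)*(\<gamma>*\<gamma> + 1) \<le> (1 + (a*c - b*d))*(1 + (a*c - b*d)) + (a*d + b*c)*(a*d + b*c)"
      using ac acs d1 b1 bd by (simp add: algebra_simps)
    then show ?thesis using e by (simp add: power2_eq_square)
  qed
  then show ?thesis by (rule power2_le_imp_le) simp
qed

theorem lemma7p1: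
  fixes \<beta>1 \<beta>2 :: complex and \<gamma> :: real and z w :: complex
  assumes "\<gamma> \<ge> 1" and "Re \<beta>1 \<ge> \<gamma>" and "Re \<beta>2 \<ge> \<gamma>"
    and "Re z \<ge> 0" and "Re w \<ge> 0"
  defines "\<psi>1 \<equiv> (\<lambda>u::complex. 1 / (u + \<beta>1))"
    and "\<psi>2 \<equiv> (\<lambda>u::complex. 1 / (u + \<beta>2))"
  defines "\<theta> \<equiv> \<psi>1 \<circ> \<psi>2"
  shows "cmod (\<theta> z - \<theta> w) \<le> cmod (z - w) / (\<gamma>\<^sup>2 + 1)\<^sup>2"
proof -
  define u where "u = z + \<beta>2"
  define v where "v = w + \<beta>2"
  have ru: "Re u \<ge> \<gamma>" and rv: "Re v \<ge> \<gamma>" using assms(3-5) by (auto simp: u_def v_def)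
  have u0: "u \<noteq> 0" and v0: "v \<noteq> 0" using ru rv assms(1) by auto
  have ku: "cmod (1 + \<beta>1 * u) \<ge> \<gamma>\<^sup>2 + 1" by (rule key[OF assms(1) assms(2) ru])
  have kv: "cmod (1 + \<beta>1 * v) \<ge> \<gamma>\<^sup>2 + 1" by (rule key[OF assms(1) assms(2) rv])
  have pos: "\<gamma>\<^sup>2 + 1 > 0" by (simp add: add_nonneg_pos)
  have nu: "1 + \<beta>1 * u \<noteq> 0" using ku pos by auto
  have nv: "1 + \<beta>1 * v \<noteq> 0" using kv pos by auto
  have tz: "\<theta> z = u / (1 + \<beta>1 * u)"
  proof -
    have "1 / u + \<beta>1 = (1 + \<beta>1 * u) / u" using u0 by (simp add: field_simps)
    moreover have "\<theta> z = 1 / (1 / u + \<beta>1)" by (simp add: \<theta>_def \<psi>1_def \<psi>2_def u_def)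
    ultimately show ?thesis using u0 nu by simp
  qed
  have tw: "\<theta> w = v / (1 + \<beta>1 * v)"
  proof -
    have "1 / v + \<beta>1 = (1 + \<beta>1 * v) / v" using v0 by (simp add: field_simps)
    moreover have "\<theta> w = 1 / (1 / v + \<beta>1)" by (simp add: \<theta>_def \<psi>1_def \<psi>2_def v_def)
    ultimately show ?thesis using v0 nv by simp
  qed
  have "\<theta> z - \<theta> w = (z - w) / ((1 + \<beta>1 * u) * (1 + \<beta>1 * v))"
  proof -
    have "u / (1 + \<beta>1 * u) - v / (1 + \<beta>1 * v) = (u - v) / ((1 + \<beta>1 * u) * (1 + \<beta>1 * v))"
      using nu nv by (simp add: divide_simps) (simp add: algebra_simps)
    moreover have "u - v = z - w" by (simp add: u_def v_def)
    ultimately show ?thesis by (simp add: tz tw)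
  qed
  then have "cmod (\<theta> z - \<theta> w) = cmod (z - w) / (cmod (1 + \<beta>1 * u) * cmod (1 + \<beta>1 * v))"
    by (simp add: norm_divide norm_mult)
  also have "\<dots> \<le> cmod (z - w) / ((\<gamma>\<^sup>2 + 1) * (\<gamma>\<^sup>2 + 1))"
    using ku kv pos by (intro divide_left_mono mult_mono mult_pos_pos) auto
  finally show ?thesis by (simp add: power2_eq_square)
qed

end
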